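(* Let $\mathcal X,\mathcal Y,\mathcal G,\mathcal H$ be Banach spaces with continuous embeddings $\mathcal X\subset\mathcal G$ and $\mathcal Y\subset\mathcal H\subset\mathcal G^*\subset\mathcal X^*$. Let $\mathcal U\subset\mathcal X$ be open, $\mathcal E:\mathcal U\to\mathbb R$ a $C^2$ function, and $x_\infty\in\mathcal U$ a critical point, $\mathcal E'(x_\infty)=0$. Let $\mathcal M:\mathcal U\to\mathcal Y$ be a $C^1$ gradient map for $\mathcal E$, and suppose $\mathcal E$ is Morse–Bott at $x_\infty$, so that $\mathcal U\cap\mathrm{Crit}\,\mathcal E$ is a relatively open smooth submanifold of $\mathcal X$ and $K:=\mathrm{Ker}\,\mathcal E''(x_\infty)=T_{x_\infty}\mathrm{Crit}\,\mathcal E$. Suppose that for each $x\in\mathcal U$ the bounded linear operator $\mathcal M'(x):\mathcal X\to\mathcal Y$ has an extension $\mathcal M_1(x):\mathcal G\to\mathcal H$ such that the map $\mathcal U\ni x\mapsto\mathcal M_1(x)\in\mathcal L(\mathcal G,\mathcal H)$ is continuous. Assume that $K$ has a closed complement $\mathcal X_0\subset\mathcal X$, that $\mathcal K:=\mathrm{Ker}\,\mathcal M_1(x_\infty)\subset\mathcal G$ has a closed complement $\mathcal G_0\subset\mathcal G$ with $\mathcal X_0\subset\mathcal G_0$, and that $\mathrm{Ran}\,\mathcal M_1(x_\infty)\subset\mathcal H$ is closed. Then there are constants $Z\in(0,\infty)$ and $\sigma\in(0,1]$ such that every $x\in\mathcal U$ with $\|x-x_\infty\|_{\mathcal X}<\sigma$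 satisfies $$\|\mathcal M(x)\|_{\mathcal H}\geq Z\,|\mathcal E(x)-\mathcal E(x_\infty)|^{1/2}.$$
   Context: Gradient map: if $\mathcal U\subset\mathcal X$ is open and $\mathcal Y\subset\mathcal X^*$ is a Banach space continuously embedded, a continuous map $\mathcal M:\mathcal U\to\mathcal Y$ is a gradient map for a $C^1$ function $\mathcal E:\mathcal U\to\mathbb R$ if $\mathcal E'(x)v=\langle v,\mathcal M(x)\rangle_{\mathcal X\times\mathcal X^*}$ for all $x\in\mathcal U$, $v\in\mathcal X$. $\mathrm{Crit}\,\mathcal E=\{x:\mathcal E'(x)=0\}$, and $\mathcal E''(x):\mathcal X\to\mathcal X^*$ is the Hessian. A $C^2$ function $\mathcal E$ is Morse–Bott at $x_0$ if there is an open neighborhood $\mathcal U$ of $x_0$ such that $\mathcal U\cap\mathrm{Crit}\,\mathcal E$ is a relatively open smooth submanifold and $T_{x_0}\mathrm{Crit}\,\mathcal E=\mathrm{Ker}\,\mathcal E''(x_0)$. $\mathcal L(\mathcal G,\mathcal H)$ is the Banach space of bounded linear operators. *)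

theory Defs
  imports "HOL-Analysis.Analysis"
begin

text \<open>Bounded multilinear maps X^k \<rightarrow> Y, represented on lists of length k.\<close>
definition bounded_multilinear_list ::
  "nat \<Rightarrow> ('a::real_normed_vector list \<Rightarrow> 'b::real_normed_vector) \<Rightarrow> bool" where
  "bounded_multilinear_list k L \<longleftrightarrow>
     (\<forall>as bs x y. length as + length bs + 1 = k \<longrightarrow>
        L (as @ (x + y) # bs) = L (as @ x # bs) + L (as @ y # bs)) \<and>
     (\<forall>as bs x (c::real). length as + length bs + 1 = k \<longrightarrow>
        L (as @ (c *\<^sub>R x) # bs) = c *\<^sub>R L (as @ x # bs)) \<and>
     (\<exists>C. \<forall>vs. length vs = k \<longrightarrow> norm (L vs) \<le> C * prod_list (map norm vs))"

text \<open>C^k maps on an (open) set of a normed space, in the Frechet sense: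
  D j x is the j-th derivative at x (a bounded j-linear map), each D j is continuous
  in operator norm, and D (j+1) is the Frechet derivative of D j in operator norm.\<close>
definition Ck_on :: "nat \<Rightarrow> 'a::real_normed_vector set \<Rightarrow> ('a \<Rightarrow> 'b::real_normed_vector) \<Rightarrow> bool" where
  "Ck_on k U f \<longleftrightarrow> (\<exists>D :: nat \<Rightarrow> 'a \<Rightarrow> 'a list \<Rightarrow> 'b.
     (\<forall>x\<in>U. D 0 x [] = f x) \<and>
     (\<forall>j\<le>k. \<forall>x\<in>U. bounded_multilinear_list j (D j x)) \<and>
     (\<forall>j\<le>k. \<forall>x\<in>U. \<forall>e>0. \<exists>d>0. \<forall>y\<in>U. norm (y - x) < d \<longrightarrow>
        (\<forall>vs. length vs = j \<longrightarrow> norm (D j y vs - D j x vs) \<le> e * prod_list (map norm vs))) \<and>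
     (\<forall>j<k. \<forall>x\<in>U. \<forall>e>0. \<exists>d>0. \<forall>y\<in>U. norm (y - x) < d \<longrightarrow>
        (\<forall>vs. length vs = j \<longrightarrow>
           norm (D j y vs - D j x vs - D (Suc j) x ((y - x) # vs))
             \<le> e * norm (y - x) * prod_list (map norm vs))))"

definition smooth_on :: "'a::real_normed_vector set \<Rightarrow> ('a \<Rightarrow> 'b::real_normed_vector) \<Rightarrow> bool" where
  "smooth_on U f \<longleftrightarrow> (\<forall>k. Ck_on k U f)"

definition closed_complement :: "'a::real_normed_vector set \<Rightarrow> 'a set \<Rightarrow> bool" where
  "closed_complement A B \<longleftrightarrow> subspace B \<and> closed B \<and> A \<inter> B = {0} \<and>
     (\<forall>x. \<exists>a\<in>A. \<exists>b\<in>B. x = a + b)"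

definition smooth_submanifold :: "'a::banach set \<Rightarrow> bool" where
  "smooth_submanifold S \<longleftrightarrow> (\<forall>p\<in>S. \<exists>V W (\<phi>::'a \<Rightarrow> 'a) (\<psi>::'a \<Rightarrow> 'a) (F::'a set).
     open V \<and> p \<in> V \<and> open W \<and> \<phi> ` V = W \<and>
     (\<forall>x\<in>V. \<psi> (\<phi> x) = x) \<and> (\<forall>y\<in>W. \<phi> (\<psi> y) = y) \<and>
     smooth_on V \<phi> \<and> smooth_on W \<psi> \<and>
     subspace F \<and> closed F \<and> (\<exists>F'. closed_complement F F') \<and>
     \<phi> ` (V \<inter> S) = W \<inter> F)"

definition tangent_space :: "'a::real_normed_vector set \<Rightarrow> 'a \<Rightarrow> 'a set" where
  "tangent_space S p = {v. \<exists>(\<gamma>::real \<Rightarrow> 'a) e. e > 0 \<and> \<gamma> ` {-e<..<e} \<subseteq> S \<and> \<gamma> 0 = p \<and>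
      (\<gamma> has_vector_derivative v) (at 0)}"

definition crit :: "'x::real_normed_vector set \<Rightarrow> ('x \<Rightarrow> ('x \<Rightarrow>\<^sub>L real)) \<Rightarrow> 'x set" where
  "crit U E1 = {x\<in>U. E1 x = 0}"

definition morse_bott_at ::
  "'x::banach set \<Rightarrow> ('x \<Rightarrow> ('x \<Rightarrow>\<^sub>L real)) \<Rightarrow> ('x \<Rightarrow> ('x \<Rightarrow>\<^sub>L ('x \<Rightarrow>\<^sub>L real))) \<Rightarrow> 'x \<Rightarrow> bool" where
  "morse_bott_at U E1 E2 x0 \<longleftrightarrow> (\<exists>V. open V \<and> x0 \<in> V \<and> V \<subseteq> U \<and>
     smooth_submanifold (V \<inter> crit U E1) \<and>
     tangent_space (V \<inter> crit U E1) x0 = {v. blinfun_apply (E2 x0) v = 0})"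

end

theory Submission
  imports Defs "HOL-Analysis.Analysis"
begin

lemma om_approx:
  fixes T :: "'a::banach \<Rightarrow> 'b::banach"
  assumes S: "subspace S" "closed S" and T: "bounded_linear T" and R: "closed (T ` S)"
  shows "\<exists>\<delta>>0. \<forall>z\<in>T ` S. \<forall>\<eta>>0. \<exists>s\<in>S. norm s \<le> norm z / \<delta> \<and> norm (z - T s) < \<eta>"
proof -
  interpret T: bounded_linear T by fact
  define R where "R = T ` S"
  have Rsub: "subspace R" unfolding R_def using S(1) T.linear_axioms linear_subspace_image by blast
  have "0 \<in> R" using Rsub by (rule subspace_0)
  define G where "G = range (\<lambda>n::nat. R \<inter> closure (T ` (S \<inter> cball 0 (real n))))"
  have cm: "completely_metrizable_space (top_of_set R)"
  proof -
    have "closedin euclidean R" using R unfolding R_def closed_closedin .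
    from completely_metrizable_space_closedin[OF completely_metrizable_space_euclidean this]
    show ?thesis .
  qed
  have un: "\<Union>G = R"
  proof
    show "\<Union>G \<subseteq> R" unfolding G_def by blast
    show "R \<subseteq> \<Union>G"
    proof
      fix z assume "z \<in> R"
      then obtain s where s: "s \<in> S" "z = T s" unfolding R_def by auto
      obtain n::nat where "norm s \<le> real n" using real_arch_simple by blast
      then have "z \<in> T ` (S \<inter> cball 0 (real n))" using s by auto
      then have "z \<in> R \<inter> closure (T ` (S \<inter> cball 0 (real n)))" using \<open>z\<in>R\<close> closure_subset[of "T ` (S \<inter> cball 0 (real n))"] by auto
      then show "z \<in> \<Union>G" unfolding G_def by blast
    qed
  qed
  have "\<exists>T\<in>G. (top_of_set R) interior_of T \<noteq> {}"
  proof (rule ccontr)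
    assume "\<not> ?thesis"
    then have h: "\<And>T. T \<in> G \<Longrightarrow> closedin (top_of_set R) T \<and> (top_of_set R) interior_of T = {}"
      unfolding G_def by (auto simp: closedin_closed_Int)
    have "countable G" unfolding G_def by simp
    then have "(top_of_set R) interior_of \<Union>G = {}"
      using Baire_category_alt[of "top_of_set R" G] cm h by blast
    moreover have "(top_of_set R) interior_of \<Union>G = R"
      using un by (simp add: interior_of_openin)
    ultimately show False using \<open>0 \<in> R\<close> by auto
  qed
  then obtain n::nat where "(top_of_set R) interior_of (R \<inter> closure (T ` (S \<inter> cball 0 (real n)))) \<noteq> {}"
    unfolding G_def by auto
  then obtain y where y: "y \<in> (top_of_set R) interior_of (R \<inter> closure (T ` (S \<inter> cball 0 (real n))))" by blast
  then obtain Op where O: "openin (top_of_set R) Op" "y \<in> Op" "Op \<subseteq> R \<inter> closure (T ` (S \<inter> cball 0 (real n)))"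
    unfolding interior_of_def by blast
  then obtain \<epsilon> where \<epsilon>: "\<epsilon> > 0" "\<And>w. w \<in> R \<Longrightarrow> dist w y < \<epsilon> \<Longrightarrow> w \<in> Op"
    by (metis openin_euclidean_subtopology_iff)
  have yR: "y \<in> R" using O by auto
  have cl: "\<And>w. w \<in> R \<Longrightarrow> dist w y < \<epsilon> \<Longrightarrow> w \<in> closure (T ` (S \<inter> cball 0 (real n)))"
    using \<epsilon> O by blast
  define \<delta> where "\<delta> = \<epsilon> / (4 * real n + 4)"
  have \<delta>: "\<delta> > 0" unfolding \<delta>_def using \<epsilon> by auto
  show ?thesis
  proof (intro exI[of _ \<delta>] conjI \<delta> ballI allI impI)
    fix z \<eta> assume zR: "z \<in> T ` S" and \<eta>: "(\<eta>::real) > 0"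
    show "\<exists>s\<in>S. norm s \<le> norm z / \<delta> \<and> norm (z - T s) < \<eta>"
    proof (cases "z = 0")
      case True
      then show ?thesis using \<eta> S subspace_0 by (auto intro!: bexI[of _ 0])
    next
      case False
      define t where "t = \<epsilon> / (2 * norm z)"
      have t: "t > 0" unfolding t_def using False \<epsilon> by auto
      have tz: "norm (t *\<^sub>R z) = \<epsilon>/2" unfolding t_def using False \<epsilon> by auto
      have wR: "y + t *\<^sub>R z \<in> R" using zR yR Rsub unfolding R_def
        by (simp add: subspace_add subspace_scale)
      have "y + t *\<^sub>R z \<in> closure (T ` (S \<inter> cball 0 (real n)))"
        using cl[OF wR] tz \<epsilon> by (simp add: dist_norm)
      then obtain w1 where w1: "w1 \<in> T ` (S \<inter> cball 0 (real n))" "dist w1 (y + t *\<^sub>R z) < \<eta> * t / 2"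
        using \<eta> t unfolding closure_approachable by (metis half_gt_zero mult_pos_pos)
      have "y \<in> closure (T ` (S \<inter> cball 0 (real n)))" using cl[OF yR] \<epsilon> by simp
      then obtain w2 where w2: "w2 \<in> T ` (S \<inter> cball 0 (real n))" "dist w2 y < \<eta> * t / 2"
        using \<eta> t unfolding closure_approachable by (metis half_gt_zero mult_pos_pos)
      obtain s1 where s1: "s1 \<in> S" "norm s1 \<le> n" "w1 = T s1" using w1 by auto
      obtain s2 where s2: "s2 \<in> S" "norm s2 \<le> n" "w2 = T s2" using w2 by auto
      define s where "s = (1/t) *\<^sub>R (s1 - s2)"
      have sS: "s \<in> S" unfolding s_def using s1 s2 S by (simp add: subspace_diff subspace_scale)
      have "norm s = norm (s1 - s2) / t" unfolding s_def using t by simp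
      also have "\<dots> \<le> (2 * real n) / t"
        using norm_triangle_ineq4[of s1 s2] s1 s2 t by (simp add: divide_right_mono)
      also have "\<dots> = norm z * (4 * real n) / \<epsilon>" unfolding t_def using False \<epsilon> by (simp add: field_simps)
      also have "\<dots> \<le> norm z / \<delta>" unfolding \<delta>_def using \<epsilon> by (simp add: field_simps)
      finally have ns: "norm s \<le> norm z / \<delta>" .
      have "z - T s = (1/t) *\<^sub>R ((y + t *\<^sub>R z - w1) - (y - w2))"
        unfolding s_def using t s1 s2 by (simp add: T.scaleR T.diff algebra_simps)
      then have "norm (z - T s) = norm ((y + t *\<^sub>R z - w1) - (y - w2)) / t" using t by simp
      also have "\<dots> \<le> (norm (y + t *\<^sub>R z - w1) + norm (y - w2)) / t"
        using t by (intro divide_right_mono norm_triangle_ineq4) auto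
      also have "\<dots> < (\<eta> * t / 2 + \<eta> * t / 2) / t"
        using w1 w2 t by (intro divide_strict_right_mono) (auto simp: dist_norm norm_minus_commute)
      also have "\<dots> = \<eta>" using t by simp
      finally show ?thesis using sS ns by blast
    qed
  qed
qed

lemma om_exact:
  fixes T :: "'a::banach \<Rightarrow> 'b::banach"
  assumes S: "subspace S" "closed S" and T: "bounded_linear T"
    and \<delta>: "\<delta> > 0"
    and apx: "\<forall>z\<in>T ` S. \<forall>\<eta>>0. \<exists>s\<in>S. norm s \<le> norm z / \<delta> \<and> norm (z - T s) < \<eta>"
    and z: "z \<in> T ` S"
  shows "\<exists>s\<in>S. norm s \<le> 2 * norm z / \<delta> \<and> T s = z"
proof (cases "z = 0")
  case True
  then show ?thesis using S(1) subspace_0 T by (auto intro!: bexI[of _ 0] simp: linear_simps)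
next
  case False
  interpret T: bounded_linear T by fact
  have Rsub: "subspace (T ` S)" using S(1) T.linear_axioms linear_subspace_image by blast
  define g where "g w \<eta> = (SOME s. s \<in> S \<and> norm s \<le> norm w / \<delta> \<and> norm (w - T s) < \<eta>)" for w \<eta>
  have g: "g w \<eta> \<in> S \<and> norm (g w \<eta>) \<le> norm w / \<delta> \<and> norm (w - T (g w \<eta>)) < \<eta>"
    if "w \<in> T ` S" "\<eta> > 0" for w \<eta>
  proof -
    from apx that obtain s where "s \<in> S \<and> norm s \<le> norm w / \<delta> \<and> norm (w - T s) < \<eta>" by blast
    then show ?thesis unfolding g_def by (rule someI)
  qed
  define zs where "zs = rec_nat z (\<lambda>k w. w - T (g w (norm z / 2 ^ Suc k)))"
  have zs0: "zs 0 = z" unfolding zs_def by simp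
  have zsS: "zs (Suc k) = zs k - T (g (zs k) (norm z / 2 ^ Suc k))" for k unfolding zs_def by simp
  define ss where "ss k = g (zs k) (norm z / 2 ^ Suc k)" for k
  have nz: "norm z > 0" using False by simp
  have inv: "zs k \<in> T ` S \<and> norm (zs k) \<le> norm z / 2 ^ k" for k
  proof (induction k)
    case 0 then show ?case using zs0 z by simp
  next
    case (Suc k)
    have gk: "ss k \<in> S \<and> norm (ss k) \<le> norm (zs k) / \<delta> \<and> norm (zs k - T (ss k)) < norm z / 2 ^ Suc k"
      unfolding ss_def using g[of "zs k" "norm z / 2 ^ Suc k"] Suc nz by simp
    have "T (ss k) \<in> T ` S" using gk by (intro imageI) simp
    then have "zs (Suc k) \<in> T ` S" unfolding zsS ss_def[symmetric]
      by (rule subspace_diff[OF Rsub Suc.IH[THEN conjunct1]])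
    moreover have "norm (zs (Suc k)) \<le> norm z / 2 ^ Suc k"
      unfolding zsS ss_def[symmetric] using gk by simp
    ultimately show ?case by (rule conjI)
  qed
  have ssS: "ss k \<in> S" and ssn: "norm (ss k) \<le> (norm z / \<delta>) * (1/2) ^ k" for k
  proof -
    have gk: "ss k \<in> S \<and> norm (ss k) \<le> norm (zs k) / \<delta>"
      unfolding ss_def using g[of "zs k" "norm z / 2 ^ Suc k"] inv[of k] nz by simp
    then show "ss k \<in> S" by simp
    have "norm (ss k) \<le> norm (zs k) / \<delta>" using gk by simp
    also have "\<dots> \<le> (norm z / 2 ^ k) / \<delta>" using inv[of k] \<delta> by (intro divide_right_mono) auto
    also have "\<dots> = (norm z / \<delta>) * (1/2) ^ k" by (simp add: power_one_over)
    finally show "norm (ss k) \<le> (norm z / \<delta>) * (1/2) ^ k" .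
  qed
  have geo: "summable (\<lambda>k. (norm z / \<delta>) * (1/2::real) ^ k)"
    by (intro summable_mult summable_geometric) simp
  have sn: "summable (\<lambda>k. norm (ss k))"
    by (rule summable_comparison_test[OF _ geo]) (use ssn in auto)
  have sm: "summable ss" using sn by (rule summable_norm_cancel)
  define s where "s = suminf ss"
  have lim: "(\<lambda>n. \<Sum>i<n. ss i) \<longlonglongrightarrow> s" unfolding s_def using sm by (rule summable_LIMSEQ)
  have "s \<in> S"
  proof -
    have "(\<Sum>i<n. ss i) \<in> S" for n using S(1) ssS by (simp add: subspace_sum)
    then show ?thesis by (intro closed_sequentially[OF S(2) _ lim]) auto
  qed
  moreover have "norm s \<le> 2 * norm z / \<delta>"
  proof -
    have "norm s \<le> (\<Sum>k. norm (ss k))" unfolding s_def using sn by (rule summable_norm)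
    also have "\<dots> \<le> (\<Sum>k. (norm z / \<delta>) * (1/2::real) ^ k)"
      using sn geo ssn by (intro suminf_le) auto
    also have "\<dots> = (norm z / \<delta>) * (\<Sum>k. (1/2::real) ^ k)"
      by (rule suminf_mult) (rule summable_geometric, simp)
    also have "\<dots> = 2 * norm z / \<delta>" by (subst suminf_geometric) auto
    finally show ?thesis .
  qed
  moreover have "T s = z"
  proof -
    have eq: "T (\<Sum>i<n. ss i) = z - zs n" for n
    proof (induction n)
      case 0 then show ?case using zs0 by (simp add: T.zero)
    next
      case (Suc n) then show ?case by (simp add: T.add zsS ss_def)
    qed
    have "(\<lambda>n. T (\<Sum>i<n. ss i)) \<longlonglongrightarrow> T s" by (rule T.tendsto[OF lim])
    moreover have "(\<lambda>n. z - zs n) \<longlonglongrightarrow> z - 0"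
    proof (intro tendsto_diff tendsto_const)
      have "(\<lambda>n. norm z / 2 ^ n) \<longlonglongrightarrow> 0"
        by (intro LIMSEQ_divide_realpow_zero) simp
      moreover have "\<forall>\<^sub>F n in sequentially. norm (zs n) \<le> norm z / 2 ^ n"
        using inv by simp
      ultimately show "zs \<longlonglongrightarrow> 0"
        by (rule Lim_null_comparison[rotated])
    qed
    ultimately show ?thesis unfolding eq by (simp add: LIMSEQ_unique)
  qed
  ultimately show ?thesis by (intro bexI[of _ s]) auto
qed

lemma bounded_below_closed_range:
  fixes T :: "'a::banach \<Rightarrow> 'b::banach"
  assumes S: "subspace S" "closed S" and T: "bounded_linear T" and R: "closed (T ` S)"
    and inj: "\<And>s. s \<in> S \<Longrightarrow> T s = 0 \<Longrightarrow> s = 0"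
  shows "\<exists>c>0. \<forall>s\<in>S. c * norm s \<le> norm (T s)"
proof -
  interpret T: bounded_linear T by fact
  obtain \<delta> where \<delta>: "\<delta> > 0" and apx: "\<forall>z\<in>T ` S. \<forall>\<eta>>0. \<exists>s\<in>S. norm s \<le> norm z / \<delta> \<and> norm (z - T s) < \<eta>"
    using om_approx[OF S T R] by blast
  show ?thesis
  proof (intro exI[of _ "\<delta>/2"] conjI ballI)
    show "\<delta>/2 > 0" using \<delta> by simp
    fix x assume x: "x \<in> S"
    have Tx: "T x \<in> T ` S" using x by simp
    obtain s where s: "s \<in> S" "norm s \<le> 2 * norm (T x) / \<delta>" "T s = T x"
      using om_exact[OF S T \<delta> apx Tx] by blast
    have "s - x \<in> S" by (rule subspace_diff[OF S(1) s(1) x])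
    moreover have "T (s - x) = 0" using s by (simp add: T.diff)
    ultimately have "s = x" using inj by fastforce
    then show "\<delta> / 2 * norm x \<le> norm (T x)" using s \<delta> by (simp add: field_simps)
  qed
qed

lemma complement_projection:
  fixes K X0 :: "'a::banach set"
  assumes K: "subspace K" "closed K" and C: "closed_complement K X0"
  shows "\<exists>P. bounded_linear P \<and> (\<forall>y. P y \<in> K \<and> y - P y \<in> X0) \<and> (\<forall>y. y \<in> X0 \<longleftrightarrow> P y = 0)
           \<and> (\<forall>k\<in>K. P k = k)"
proof -
  have X0: "subspace X0" "closed X0" "K \<inter> X0 = {0}" "\<And>x. \<exists>a\<in>K. \<exists>b\<in>X0. x = a + b"
    using C unfolding closed_complement_def by auto
  have uniq: "a1 = a2" if "a1 \<in> K" "a2 \<in> K" "y - a1 \<in> X0" "y - a2 \<in> X0" for y a1 a2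
  proof -
    have "a1 - a2 \<in> K" using that K(1) subspace_diff by blast
    moreover have "(y - a2) - (y - a1) \<in> X0" using that X0(1) subspace_diff by blast
    moreover have "(y - a2) - (y - a1) = a1 - a2" by simp
    ultimately have "a1 - a2 \<in> K \<inter> X0" by simp
    then show ?thesis using X0(3) by simp
  qed
  have ex: "\<exists>a. a \<in> K \<and> y - a \<in> X0" for y
  proof -
    obtain a b where "a \<in> K" "b \<in> X0" "y = a + b" using X0(4) by blast
    then show ?thesis by (intro exI[of _ a]) simp
  qed
  define P where "P y = (THE a. a \<in> K \<and> y - a \<in> X0)" for y
  have P: "P y \<in> K \<and> y - P y \<in> X0" for y
  proof -
    have "\<exists>!a. a \<in> K \<and> y - a \<in> X0" using ex[of y] uniq[of _ _ y] by blast
    then show ?thesis unfolding P_def by (rule theI')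
  qed
  have Peq: "P y = a" if "a \<in> K" "y - a \<in> X0" for y a
    using uniq[of "P y" a y] P[of y] that by simp
  have Padd: "P (x + y) = P x + P y" for x y
  proof (rule Peq)
    show "P x + P y \<in> K" using P K(1) subspace_add by blast
    have "(x - P x) + (y - P y) \<in> X0" using P X0(1) subspace_add by blast
    then show "x + y - (P x + P y) \<in> X0" by (simp add: algebra_simps)
  qed
  have Pscale: "P (c *\<^sub>R x) = c *\<^sub>R P x" for c x
  proof (rule Peq)
    show "c *\<^sub>R P x \<in> K" using P K(1) subspace_scale by blast
    have "c *\<^sub>R (x - P x) \<in> X0" using P X0(1) subspace_scale by blast
    then show "c *\<^sub>R x - c *\<^sub>R P x \<in> X0" by (simp add: algebra_simps)
  qed
  define T where "T p = fst p + snd p" for p :: "'a \<times> 'a"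
  have T: "bounded_linear T" unfolding T_def by (intro bounded_linear_add bounded_linear_fst bounded_linear_snd)
  have S: "subspace (K \<times> X0)" using K(1) X0(1) by (rule subspace_Times)
  have Sc: "closed (K \<times> X0)" using K(2) X0(2) by (rule closed_Times)
  have img: "T ` (K \<times> X0) = UNIV"
  proof -
    have "y \<in> T ` (K \<times> X0)" for y
    proof -
      obtain a b where "a \<in> K" "b \<in> X0" "y = a + b" using X0(4) by blast
      then show ?thesis unfolding T_def by (intro image_eqI[of _ _ "(a,b)"]) auto
    qed
    then show ?thesis by blast
  qed
  have inj: "p = 0" if pin: "p \<in> K \<times> X0" and Tp: "T p = 0" for p
  proof -
    obtain a b where ab: "p = (a,b)" "a \<in> K" "b \<in> X0" using pin by (cases p) auto
    then have "a = - b" using Tp unfolding T_def by (simp add: eq_neg_iff_add_eq_0)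
    then have "a \<in> X0" using subspace_neg[OF X0(1) ab(3)] by simp
    then have "a \<in> K \<inter> X0" using ab by simp
    then have "a = 0" using X0(3) by simp
    then show ?thesis using ab \<open>a = - b\<close> by (simp add: zero_prod_def)
  qed
  have clT: "closed (T ` (K \<times> X0))" unfolding img by (rule closed_UNIV)
  obtain c where c: "c > 0" "\<forall>p\<in>K \<times> X0. c * norm p \<le> norm (T p)"
    using bounded_below_closed_range[OF S Sc T clT inj] by blast
  have bnd: "norm (P y) \<le> norm y * (1/c)" for y
  proof -
    have "(P y, y - P y) \<in> K \<times> X0" using P by simp
    then have "c * norm (P y, y - P y) \<le> norm (T (P y, y - P y))" using c(2) by blast
    then have "c * norm (P y, y - P y) \<le> norm y" unfolding T_def by simp
    moreover have "norm (P y) \<le> norm (P y, y - P y)" by (rule norm_fst_le)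
    then have "c * norm (P y) \<le> c * norm (P y, y - P y)" using c by (intro mult_left_mono) auto
    ultimately have "c * norm (P y) \<le> norm y" by linarith
    then show ?thesis using c by (simp add: field_simps)
  qed
  have bl: "bounded_linear P"
    by (rule bounded_linear_intro[OF Padd Pscale bnd])
  have z: "P y = 0 \<longleftrightarrow> y \<in> X0" for y
  proof
    assume "P y = 0" then show "y \<in> X0" using P[of y] by simp
  next
    assume "y \<in> X0" then show "P y = 0" using Peq[of 0 y] K(1) subspace_0 by auto
  qed
  have id: "P k = k" if "k \<in> K" for k using Peq[of k k] that X0(1) subspace_0 by auto
  show ?thesis using bl P z id by blast
qed

lemma C1_from_Ck:
  fixes f :: "'a::real_normed_vector \<Rightarrow> 'b::real_normed_vector"
  assumes "Ck_on 1 U f" "open U"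
  shows "\<exists>f'. (\<forall>x\<in>U. bounded_linear (f' x) \<and> (f has_derivative f' x) (at x)) \<and>
     (\<forall>x\<in>U. \<forall>e>0. \<exists>d>0. \<forall>y\<in>U. norm (y - x) < d \<longrightarrow> (\<forall>v. norm (f' y v - f' x v) \<le> e * norm v))"
proof -
  obtain D :: "nat \<Rightarrow> 'a \<Rightarrow> 'a list \<Rightarrow> 'b" where
    D0: "\<forall>x\<in>U. D 0 x [] = f x" and
    ml: "\<forall>j\<le>1. \<forall>x\<in>U. bounded_multilinear_list j (D j x)" and
    ct: "\<forall>j\<le>1. \<forall>x\<in>U. \<forall>e>0. \<exists>d>0. \<forall>y\<in>U. norm (y - x) < d \<longrightarrow>
        (\<forall>vs. length vs = j \<longrightarrow> norm (D j y vs - D j x vs) \<le> e * prod_list (map norm vs))" and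
    dr: "\<forall>j<1. \<forall>x\<in>U. \<forall>e>0. \<exists>d>0. \<forall>y\<in>U. norm (y - x) < d \<longrightarrow>
        (\<forall>vs. length vs = j \<longrightarrow>
           norm (D j y vs - D j x vs - D (Suc j) x ((y - x) # vs))
             \<le> e * norm (y - x) * prod_list (map norm vs))"
    using assms(1) unfolding Ck_on_def apply (elim exE conjE) apply (rule that) apply assumption+ done
  define f' where "f' x v = D 1 x [v]" for x v
  have bl: "bounded_linear (f' x)" if "x \<in> U" for x
  proof -
    have m: "bounded_multilinear_list 1 (D 1 x)" using ml that by simp
    have add: "D 1 x [a + b] = D 1 x [a] + D 1 x [b]" for a b
    proof -
      have "\<forall>as bs x' y. length as + length bs + 1 = 1 \<longrightarrow>
        D 1 x (as @ (x' + y) # bs) = D 1 x (as @ x' # bs) + D 1 x (as @ y # bs)"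
        using m unfolding bounded_multilinear_list_def by (elim conjE) assumption
      from this[rule_format, of "[]" "[]" a b] show ?thesis by simp
    qed
    have sc: "D 1 x [c *\<^sub>R a] = c *\<^sub>R D 1 x [a]" for c a
    proof -
      have "\<forall>as bs x' (c::real). length as + length bs + 1 = 1 \<longrightarrow>
        D 1 x (as @ (c *\<^sub>R x') # bs) = c *\<^sub>R D 1 x (as @ x' # bs)"
        using m unfolding bounded_multilinear_list_def by (elim conjE) assumption
      from this[rule_format, of "[]" "[]" c a] show ?thesis by simp
    qed
    have "\<exists>C. \<forall>vs. length vs = 1 \<longrightarrow> norm (D 1 x vs) \<le> C * prod_list (map norm vs)"
      using m unfolding bounded_multilinear_list_def by (elim conjE) assumption
    then obtain C where C: "\<forall>vs. length vs = 1 \<longrightarrow> norm (D 1 x vs) \<le> C * prod_list (map norm vs)"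
      by blast
    have "norm (D 1 x [a]) \<le> norm a * C" for a using C[rule_format, of "[a]"] by (simp add: mult.commute)
    then show ?thesis unfolding f'_def by (intro bounded_linear_intro[of _ C] add sc) auto
  qed
  have der: "(f has_derivative f' x) (at x)" if x: "x \<in> U" for x
    unfolding has_derivative_at_alt
  proof (intro conjI allI impI bl[OF x])
    fix e :: real assume e: "e > 0"
    obtain d1 where d1: "d1 > 0" "\<forall>y\<in>U. norm (y - x) < d1 \<longrightarrow>
        (\<forall>vs. length vs = 0 \<longrightarrow> norm (D 0 y vs - D 0 x vs - D (Suc 0) x ((y - x) # vs))
             \<le> e * norm (y - x) * prod_list (map norm vs))"
      using dr[rule_format, OF zero_less_one x e] by blast
    obtain d2 where d2: "d2 > 0" "ball x d2 \<subseteq> U" using assms(2) x open_contains_ball by blast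
    show "\<exists>d>0. \<forall>y. norm (y - x) < d \<longrightarrow> norm (f y - f x - f' x (y - x)) \<le> e * norm (y - x)"
    proof (intro exI[of _ "min d1 d2"] conjI allI impI)
      show "min d1 d2 > 0" using d1 d2 by simp
      fix y assume y: "norm (y - x) < min d1 d2"
      then have yU: "y \<in> U" using d2 by (auto simp: dist_norm norm_minus_commute)
      have "norm (D 0 y [] - D 0 x [] - D (Suc 0) x [y - x]) \<le> e * norm (y - x)"
        using d1(2)[rule_format, OF yU _, of "[]"] y by simp
      then show "norm (f y - f x - f' x (y - x)) \<le> e * norm (y - x)"
        using D0 yU x unfolding f'_def by simp
    qed
  qed
  have cont: "\<exists>d>0. \<forall>y\<in>U. norm (y - x) < d \<longrightarrow> (\<forall>v. norm (f' y v - f' x v) \<le> e * norm v)"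
    if xU: "x \<in> U" and e: "e > 0" for x e
  proof -
    obtain d where d: "d > 0" "\<forall>y\<in>U. norm (y - x) < d \<longrightarrow>
        (\<forall>vs. length vs = 1 \<longrightarrow> norm (D 1 y vs - D 1 x vs) \<le> e * prod_list (map norm vs))"
      using ct[rule_format, OF order_refl xU e] by blast
    show ?thesis
    proof (intro exI[of _ d] conjI ballI impI allI d(1))
      fix y v assume "y \<in> U" "norm (y - x) < d"
      then show "norm (f' y v - f' x v) \<le> e * norm v"
        using d(2)[rule_format, of y "[v]"] unfolding f'_def by simp
    qed
  qed
  show ?thesis using bl der cont by blast
qed

lemma find_crit:
  fixes \<psi> B C P :: "'a::banach \<Rightarrow> 'a" and \<psi>' :: "'a \<Rightarrow> 'a \<Rightarrow> 'a"
  assumes W: "open W" and F: "subspace F" "closed F" and f0: "f0 \<in> W" "f0 \<in> F"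
    and \<psi>0: "\<psi> f0 = x0"
    and \<psi>': "\<And>y. y \<in> W \<Longrightarrow> bounded_linear (\<psi>' y) \<and> (\<psi> has_derivative \<psi>' y) (at y)"
    and \<psi>'c: "\<And>e. e > 0 \<Longrightarrow> \<exists>d>0. \<forall>y\<in>W. norm (y - f0) < d \<longrightarrow> (\<forall>v. norm (\<psi>' y v - \<psi>' f0 v) \<le> e * norm v)"
    and B: "B = \<psi>' f0" and C: "bounded_linear C" and CB: "\<And>v. C (B v) = v" and BC: "\<And>v. B (C v) = v"
    and P: "bounded_linear P" and PB: "\<And>u. u \<in> F \<Longrightarrow> P (B u) = B u"
    and CPF: "\<And>y. C (P y) \<in> F" and P0: "\<And>y. P y = 0 \<Longrightarrow> y \<in> X0"
    and \<delta>: "\<delta> > 0"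
  shows "\<exists>\<sigma>>0. \<forall>x. norm (x - x0) < \<sigma> \<longrightarrow> (\<exists>f. (\<forall>t\<in>{0..1}. f0 + t *\<^sub>R (f - f0) \<in> W \<inter> F) \<and>
            norm (\<psi> f - x0) < \<delta> \<and> \<psi> f - x \<in> X0)"
proof -
  interpret C: bounded_linear C by fact
  interpret P: bounded_linear P by fact
  have Bl: "bounded_linear B" using \<psi>'[OF f0(1)] B by simp
  interpret B: bounded_linear B by fact
  obtain nC where nC: "nC \<ge> 0" "\<And>v. norm (C v) \<le> norm v * nC" using C.nonneg_bounded by blast
  obtain nP where nP: "nP \<ge> 0" "\<And>v. norm (P v) \<le> norm v * nP" using P.nonneg_bounded by blast
  define \<eta> where "\<eta> = 1 / (2 * (nC + 1) * (nP + 1))"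
  have \<eta>: "\<eta> > 0" unfolding \<eta>_def using nC nP by simp
  have \<eta>2: "nC * nP * \<eta> \<le> 1/2"
  proof -
    have "nC * nP \<le> (nC + 1) * (nP + 1)" using nC nP by (simp add: algebra_simps)
    then have "nC * nP * \<eta> \<le> ((nC + 1) * (nP + 1)) * \<eta>" using \<eta> by (intro mult_right_mono) auto
    also have "((nC + 1) * (nP + 1)) * \<eta> = 1/2"
    proof -
      have "nC + 1 > 0" "nP + 1 > 0" using nC nP by auto
      then show ?thesis unfolding \<eta>_def by (simp add: mult.assoc)
    qed
    finally show ?thesis .
  qed
  obtain r0 where r0: "r0 > 0" "ball f0 r0 \<subseteq> W" using W f0(1) open_contains_ball by blast
  obtain r1 where r1: "r1 > 0" "\<forall>y\<in>W. norm (y - f0) < r1 \<longrightarrow> (\<forall>v. norm (\<psi>' y v - \<psi>' f0 v) \<le> \<eta> * norm v)"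
    using \<psi>'c[OF \<eta>] by blast
  have "isCont \<psi> f0" using \<psi>'[OF f0(1)] has_derivative_continuous by blast
  then obtain r2 where r2: "r2 > 0" "\<forall>y. dist y f0 < r2 \<longrightarrow> dist (\<psi> y) (\<psi> f0) < \<delta>"
    unfolding continuous_at_eps_delta using \<delta> by blast
  define r where "r = min r0 (min r1 r2) / 2"
  have r: "r > 0" "r < r0" "r < r1" "r < r2" unfolding r_def using r0 r1 r2 by auto
  define SS where "SS = F \<inter> cball f0 r"
  have SSW: "y \<in> W" if "y \<in> cball f0 r" for y
    using that r r0 by (auto simp: dist_commute)
  define H where "H z = \<psi> z - B z" for z
  have Hlip: "norm (H f - H g) \<le> \<eta> * norm (f - g)" if "f \<in> cball f0 r" "g \<in> cball f0 r" for f g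
  proof (rule differentiable_bound[OF convex_cball _ _ that])
    fix z assume z: "z \<in> cball f0 r"
    have zW: "z \<in> W" using SSW z by blast
    have "(\<psi> has_derivative \<psi>' z) (at z)" using \<psi>'[OF zW] by (rule conjunct2)
    then have d1: "(\<psi> has_derivative \<psi>' z) (at z within cball f0 r)" by (rule has_derivative_at_withinI)
    have d2: "(B has_derivative B) (at z within cball f0 r)" using B.has_derivative[OF has_derivative_ident] by simp
    show "(H has_derivative (\<lambda>v. \<psi>' z v - B v)) (at z within cball f0 r)"
      unfolding H_def by (rule has_derivative_diff[OF d1 d2])
    have "norm (z - f0) < r1" using z r by (auto simp: dist_norm norm_minus_commute)
    then have "\<forall>v. norm (\<psi>' z v - B v) \<le> \<eta> * norm v" using r1(2) zW unfolding B by blast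
    then show "onorm (\<lambda>v. \<psi>' z v - B v) \<le> \<eta>" using \<eta> by (intro onorm_bound) auto
  qed
  define \<sigma> where "\<sigma> = r / (2 * (nC + 1) * (nP + 1))"
  have \<sigma>: "\<sigma> > 0" unfolding \<sigma>_def using r nC nP by simp
  have \<sigma>2: "nC * nP * \<sigma> \<le> r / 2"
  proof -
    have "nC * nP \<le> (nC + 1) * (nP + 1)" using nC nP by (simp add: algebra_simps)
    then have "nC * nP * \<sigma> \<le> ((nC + 1) * (nP + 1)) * \<sigma>" using \<sigma> by (intro mult_right_mono) auto
    also have "((nC + 1) * (nP + 1)) * \<sigma> = r/2"
    proof -
      have Q: "(nC + 1) * (nP + 1) > 0" using nC nP by simp
      have e: "2 * (nC + 1) * (nP + 1) = 2 * ((nC + 1) * (nP + 1))" by (simp add: mult.assoc)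
      have g: "q * (r / (2 * q)) = r / 2" if "q > 0" for q :: real using that by simp
      show ?thesis unfolding \<sigma>_def e by (rule g[OF Q])
    qed
    finally show ?thesis .
  qed
  have CPbound: "norm (C (P v)) \<le> nC * nP * norm v" for v
  proof -
    have "norm (C (P v)) \<le> norm (P v) * nC" by (rule nC(2))
    also have "\<dots> \<le> (norm v * nP) * nC" using nP(2)[of v] nC(1) by (rule mult_right_mono)
    finally show ?thesis by (simp add: algebra_simps)
  qed
  show ?thesis
  proof (intro exI[of _ \<sigma>] conjI \<sigma> allI impI)
    fix x assume x: "norm (x - x0) < \<sigma>"
    define \<Phi> where "\<Phi> f = f - C (P (\<psi> f - x))" for f
    have lip: "dist (\<Phi> f) (\<Phi> g) \<le> (1/2) * dist f g" if f: "f \<in> SS" and g: "g \<in> SS" for f g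
    proof -
      have fg: "f - g \<in> F" using f g F(1) subspace_diff unfolding SS_def by blast
      have e1: "C (P (B (f - g))) = f - g" using PB[OF fg] CB by simp
      have "\<Phi> f - \<Phi> g = C (P (B (f - g))) - C (P (\<psi> f - \<psi> g))"
        unfolding \<Phi>_def e1 by (simp add: C.diff P.diff algebra_simps)
      also have "\<dots> = - C (P (H f - H g))"
      proof -
        have "H f - H g = (\<psi> f - \<psi> g) - B (f - g)" unfolding H_def by (simp add: B.diff)
        then have "C (P (H f - H g)) = C (P (\<psi> f - \<psi> g)) - C (P (B (f - g)))" by (simp add: C.diff P.diff)
        then show ?thesis by simp
      qed
      finally have "norm (\<Phi> f - \<Phi> g) = norm (C (P (H f - H g)))" by simp
      also have "\<dots> \<le> nC * nP * norm (H f - H g)" by (rule CPbound)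
      also have "\<dots> \<le> nC * nP * (\<eta> * norm (f - g))"
        using Hlip f g nC nP unfolding SS_def by (intro mult_left_mono) auto
      also have "\<dots> = (nC * nP * \<eta>) * norm (f - g)" by simp
      also have "\<dots> \<le> (1/2) * norm (f - g)" using \<eta>2 by (intro mult_right_mono) auto
      finally show ?thesis by (simp add: dist_norm)
    qed
    have f0SS: "f0 \<in> SS" unfolding SS_def using f0 r by simp
    have maps: "\<Phi> ` SS \<subseteq> SS"
    proof
      fix y assume "y \<in> \<Phi> ` SS"
      then obtain f where f: "f \<in> SS" "y = \<Phi> f" by blast
      have "y \<in> F" unfolding f(2) \<Phi>_def using f(1) CPF F(1) subspace_diff unfolding SS_def by blast
      moreover have "dist f0 y \<le> r"
      proof -
        have "dist (\<Phi> f) (\<Phi> f0) \<le> (1/2) * dist f f0" by (rule lip[OF f(1) f0SS])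
        also have "\<dots> \<le> r/2" using f(1) unfolding SS_def by (auto simp: dist_commute)
        finally have a: "dist (\<Phi> f) (\<Phi> f0) \<le> r/2" .
        have "\<Phi> f0 - f0 = - C (P (x0 - x))" unfolding \<Phi>_def \<psi>0 by simp
        then have "dist (\<Phi> f0) f0 = norm (C (P (x0 - x)))" by (simp add: dist_norm)
        also have "\<dots> \<le> nC * nP * norm (x0 - x)" by (rule CPbound)
        also have "\<dots> \<le> nC * nP * \<sigma>" using x nC nP by (intro mult_left_mono) (auto simp: norm_minus_commute)
        also have "\<dots> \<le> r/2" by (rule \<sigma>2)
        finally have b: "dist (\<Phi> f0) f0 \<le> r/2" .
        have "dist f0 y \<le> dist (\<Phi> f) (\<Phi> f0) + dist (\<Phi> f0) f0"
          unfolding f(2) by (metis dist_commute dist_triangle)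
        then show ?thesis using a b by linarith
      qed
      ultimately show "y \<in> SS" unfolding SS_def by simp
    qed
    have comp: "complete SS" unfolding complete_eq_closed SS_def using F(2) by (intro closed_Int) auto
    have "\<exists>!f. f \<in> SS \<and> \<Phi> f = f"
      by (rule Banach_fix[OF comp _ _ _ maps lip]) (use f0SS in auto)
    then obtain f where f: "f \<in> SS" "\<Phi> f = f" by blast
    have "C (P (\<psi> f - x)) = 0" using f(2) unfolding \<Phi>_def by simp
    then have "B (C (P (\<psi> f - x))) = 0" by (simp add: B.zero)
    moreover have "B (C v) = v" for v by (rule BC)
    ultimately have "P (\<psi> f - x) = 0" by simp
    then have X0: "\<psi> f - x \<in> X0" by (rule P0)
    have seg: "\<forall>t\<in>{0..1}. f0 + t *\<^sub>R (f - f0) \<in> W \<inter> F"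
    proof
      fix t :: real assume t: "t \<in> {0..1}"
      have "f0 + t *\<^sub>R (f - f0) \<in> cball f0 r"
      proof -
        have "norm (t *\<^sub>R (f - f0)) = t * norm (f - f0)" using t by simp
        also have "\<dots> \<le> 1 * norm (f - f0)" using t by (intro mult_right_mono) auto
        also have "\<dots> \<le> r" using f(1) unfolding SS_def by (simp add: dist_norm norm_minus_commute)
        finally show ?thesis by (simp add: dist_norm)
      qed
      moreover have "f0 + t *\<^sub>R (f - f0) \<in> F"
        using f(1) f0(2) F(1) unfolding SS_def by (simp add: subspace_add subspace_scale subspace_diff)
      ultimately show "f0 + t *\<^sub>R (f - f0) \<in> W \<inter> F" using SSW by blast
    qed
    have "norm (\<psi> f - x0) < \<delta>"
    proof -
      have "dist f f0 < r2" using f(1) r unfolding SS_def by (simp add: dist_commute)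
      then show ?thesis using r2 \<psi>0 by (simp add: dist_norm)
    qed
    then show "\<exists>f. (\<forall>t\<in>{0..1}. f0 + t *\<^sub>R (f - f0) \<in> W \<inter> F) \<and> norm (\<psi> f - x0) < \<delta> \<and> \<psi> f - x \<in> X0"
      using seg X0 by blast
  qed
qed

lemma seg_estimates:
  fixes iX :: "'x::banach \<Rightarrow>\<^sub>L 'g::banach"
    and jY :: "'y::banach \<Rightarrow>\<^sub>L 'h::banach"
    and jH :: "'h \<Rightarrow>\<^sub>L ('g \<Rightarrow>\<^sub>L real)"
    and E :: "'x \<Rightarrow> real" and E1 :: "'x \<Rightarrow> ('x \<Rightarrow>\<^sub>L real)"
    and M :: "'x \<Rightarrow> 'y" and M' :: "'x \<Rightarrow> ('x \<Rightarrow>\<^sub>L 'y)" and M1 :: "'x \<Rightarrow> ('g \<Rightarrow>\<^sub>L 'h)"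
    and A :: "'g \<Rightarrow>\<^sub>L 'h"
  assumes segU: "\<And>t. t \<in> {0..1} \<Longrightarrow> xc + t *\<^sub>R (x - xc) \<in> U"
    and near: "\<And>t. t \<in> {0..1} \<Longrightarrow> norm (M1 (xc + t *\<^sub>R (x - xc)) - A) \<le> \<epsilon>"
    and E_deriv: "\<And>x. x \<in> U \<Longrightarrow> (E has_derivative blinfun_apply (E1 x)) (at x)"
    and M_deriv: "\<And>x. x \<in> U \<Longrightarrow> (M has_derivative blinfun_apply (M' x)) (at x)"
    and M_grad: "\<And>x v. x \<in> U \<Longrightarrow>
        blinfun_apply (E1 x) v = blinfun_apply (jH (jY (M x))) (iX v)"
    and M1_ext: "\<And>x v. x \<in> U \<Longrightarrow> blinfun_apply (M1 x) (iX v) = jY (M' x v)"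
    and M0: "jY (M xc) = 0"
  shows "norm (jY (M x) - A (iX (x - xc))) \<le> \<epsilon> * norm (iX (x - xc))"
    and "\<bar>E x - E xc\<bar> \<le> norm jH * (norm A + \<epsilon>) * (norm (iX (x - xc)))\<^sup>2"
proof -
  define h where "h = x - xc"
  define g where "g = iX h"
  define z where "z t = xc + t *\<^sub>R h" for t :: real
  have z1: "z 1 = x" unfolding z_def h_def by simp
  have z0: "z 0 = xc" unfolding z_def by simp
  have zU: "z t \<in> U" if "t \<in> {0..1}" for t using segU[OF that] unfolding z_def h_def .
  have \<epsilon>: "\<epsilon> \<ge> 0"
  proof -
    have "norm (M1 (xc + 0 *\<^sub>R (x - xc)) - A) \<le> \<epsilon>" by (rule near) simp
    moreover have "0 \<le> norm (M1 (xc + 0 *\<^sub>R (x - xc)) - A)" by (rule norm_ge_zero)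
    ultimately show ?thesis by (rule order_trans[rotated])
  qed
  have zd: "(z has_derivative (\<lambda>s. s *\<^sub>R h)) (at t)" for t
  proof -
    have "((\<lambda>t. t *\<^sub>R h) has_derivative (\<lambda>s. s *\<^sub>R h)) (at t)"
      by (rule bounded_linear.has_derivative[OF bounded_linear_scaleR_left has_derivative_ident])
    then have "((\<lambda>t. xc + t *\<^sub>R h) has_derivative (\<lambda>s. 0 + s *\<^sub>R h)) (at t)"
      by (rule has_derivative_add[OF has_derivative_const])
    then show ?thesis unfolding z_def by simp
  qed
  define \<phi> where "\<phi> t = jY (M (z t)) - t *\<^sub>R A g" for t
  define D where "D t = (\<lambda>s. jY (M' (z t) (s *\<^sub>R h)) - s *\<^sub>R A g)" for t
  have \<phi>d: "(\<phi> has_derivative D t) (at t within {0..1})" if t: "t \<in> {0..1}" for t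
  proof -
    have "(M has_derivative M' (z t)) (at (z t))" using M_deriv[OF zU[OF t]] .
    then have "(M \<circ> z has_derivative (M' (z t)) \<circ> (\<lambda>s. s *\<^sub>R h)) (at t)" by (rule diff_chain_at[OF zd])
    then have "((\<lambda>t. jY ((M \<circ> z) t)) has_derivative (\<lambda>s. jY (((M' (z t)) \<circ> (\<lambda>s. s *\<^sub>R h)) s))) (at t)"
      by (rule bounded_linear.has_derivative[OF blinfun.bounded_linear_right])
    moreover have "((\<lambda>t. t *\<^sub>R A g) has_derivative (\<lambda>s. s *\<^sub>R A g)) (at t)"
      by (rule bounded_linear.has_derivative[OF bounded_linear_scaleR_left has_derivative_ident])
    ultimately have "(\<phi> has_derivative D t) (at t)"
      unfolding \<phi>_def D_def by (simp add: o_def has_derivative_diff)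
    then show ?thesis by (rule has_derivative_at_withinI)
  qed
  have Dv: "D t s = s *\<^sub>R (M1 (z t) g - A g)" if t: "t \<in> {0..1}" for t s
  proof -
    have "jY (M' (z t) (s *\<^sub>R h)) = s *\<^sub>R jY (M' (z t) h)"
      by (simp add: blinfun.scaleR_right)
    also have "jY (M' (z t) h) = M1 (z t) g" unfolding g_def using M1_ext[OF zU[OF t]] by simp
    finally show ?thesis unfolding D_def by (simp add: scaleR_diff_right)
  qed
  have Dn: "onorm (D t) \<le> \<epsilon> * norm g" if t: "t \<in> {0..1}" for t
  proof (rule onorm_bound)
    show "0 \<le> \<epsilon> * norm g" using \<epsilon> by simp
    fix s
    have "norm (M1 (z t) g - A g) = norm (blinfun_apply (M1 (z t) - A) g)" by (simp add: blinfun.diff_left)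
    also have "\<dots> \<le> norm (M1 (z t) - A) * norm g" by (rule norm_blinfun)
    also have "\<dots> \<le> \<epsilon> * norm g" using near[OF t] unfolding z_def h_def by (intro mult_right_mono) auto
    finally have "norm (M1 (z t) g - A g) \<le> \<epsilon> * norm g" .
    then have k: "\<bar>s\<bar> * norm (M1 (z t) g - A g) \<le> \<bar>s\<bar> * (\<epsilon> * norm g)" by (intro mult_left_mono) auto
    then show "norm (D t s) \<le> \<epsilon> * norm g * norm s"
      unfolding Dv[OF t] by (simp add: mult.commute mult.left_commute)
  qed
  have \<phi>0: "\<phi> 0 = 0" unfolding \<phi>_def z0 M0 by simp
  have \<phi>b: "norm (\<phi> s) \<le> \<epsilon> * norm g * s" if s: "s \<in> {0..1}" for s
  proof -
    have "norm (\<phi> s - \<phi> 0) \<le> \<epsilon> * norm g * norm (s - 0)"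
      by (rule differentiable_bound[OF convex_real_interval(5) \<phi>d Dn s]) auto
    then show ?thesis using s unfolding \<phi>0 by simp
  qed
  show "norm (jY (M x) - A (iX (x - xc))) \<le> \<epsilon> * norm (iX (x - xc))"
    using \<phi>b[of 1] unfolding \<phi>_def z1 g_def h_def by simp
  have Mb: "norm (jY (M (z s))) \<le> (norm A + \<epsilon>) * norm g" if s: "s \<in> {0..1}" for s
  proof -
    have "jY (M (z s)) = \<phi> s + s *\<^sub>R A g" unfolding \<phi>_def by simp
    then have "norm (jY (M (z s))) \<le> norm (\<phi> s) + norm (s *\<^sub>R A g)"
      using norm_triangle_ineq[of "\<phi> s" "s *\<^sub>R A g"] by (simp only:)
    also have "norm (s *\<^sub>R A g) \<le> norm (A g)" using s by (simp add: mult_left_le_one_le)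
    also have "norm (A g) \<le> norm A * norm g" by (rule norm_blinfun)
    also have "norm (\<phi> s) \<le> \<epsilon> * norm g" using \<phi>b[OF s] s \<epsilon>
      by (meson atLeastAtMost_iff mult_left_le mult_nonneg_nonneg norm_ge_zero order_trans)
    finally show ?thesis by (simp add: algebra_simps)
  qed
  define q where "q t = E (z t)" for t
  define DE where "DE t = (\<lambda>s. blinfun_apply (E1 (z t)) (s *\<^sub>R h))" for t
  have qd: "(q has_derivative DE t) (at t within {0..1})" if t: "t \<in> {0..1}" for t
  proof -
    have "(E \<circ> z has_derivative blinfun_apply (E1 (z t)) \<circ> (\<lambda>s. s *\<^sub>R h)) (at t)"
      by (rule diff_chain_at[OF zd E_deriv[OF zU[OF t]]])
    then have "(q has_derivative DE t) (at t)" unfolding q_def DE_def by (simp add: o_def)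
    then show ?thesis by (rule has_derivative_at_withinI)
  qed
  have DEn: "onorm (DE t) \<le> norm jH * (norm A + \<epsilon>) * (norm g)\<^sup>2" if t: "t \<in> {0..1}" for t
  proof (rule onorm_bound)
    show "0 \<le> norm jH * (norm A + \<epsilon>) * (norm g)\<^sup>2" using \<epsilon> by simp
    fix s
    have "DE t s = s * blinfun_apply (jH (jY (M (z t)))) g"
      unfolding DE_def g_def using M_grad[OF zU[OF t]] by (simp add: blinfun.scaleR_right)
    then have "norm (DE t s) = \<bar>s\<bar> * \<bar>blinfun_apply (jH (jY (M (z t)))) g\<bar>" by (simp add: abs_mult)
    also have "\<bar>blinfun_apply (jH (jY (M (z t)))) g\<bar> \<le> norm (jH (jY (M (z t)))) * norm g"
      using norm_blinfun[of "jH (jY (M (z t)))" g] by simp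
    also have "norm (jH (jY (M (z t)))) \<le> norm jH * norm (jY (M (z t)))" by (rule norm_blinfun)
    also have "norm (jY (M (z t))) \<le> (norm A + \<epsilon>) * norm g" by (rule Mb[OF t])
    finally show "norm (DE t s) \<le> norm jH * (norm A + \<epsilon>) * (norm g)\<^sup>2 * norm s"
      by (simp add: power2_eq_square mult_left_mono mult_right_mono algebra_simps)
  qed
  have "norm (q 1 - q 0) \<le> norm jH * (norm A + \<epsilon>) * (norm g)\<^sup>2 * norm (1 - (0::real))"
    by (rule differentiable_bound[OF convex_real_interval(5) qd DEn]) auto
  then show "\<bar>E x - E xc\<bar> \<le> norm jH * (norm A + \<epsilon>) * (norm (iX (x - xc)))\<^sup>2"
    unfolding q_def z1 z0 g_def h_def by simp
qed

lemma vd_in_closed_subspace: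
  fixes g :: "real \<Rightarrow> 'a::real_normed_vector"
  assumes F: "subspace F" "closed F" and d: "(g has_vector_derivative v) (at 0)"
    and e: "e > 0" and gF: "\<And>t. \<bar>t\<bar> < e \<Longrightarrow> g t \<in> F"
  shows "v \<in> F"
proof -
  have hd: "(g has_derivative (\<lambda>t. t *\<^sub>R v)) (at 0)" using d unfolding has_vector_derivative_def .
  have "v \<in> closure F"
    unfolding closure_approachable
  proof (intro allI impI)
    fix \<epsilon> :: real assume \<epsilon>: "\<epsilon> > 0"
    have alt: "\<forall>e>0. \<exists>d>0. \<forall>y. norm (y - 0) < d \<longrightarrow> norm (g y - g 0 - (y - 0) *\<^sub>R v) \<le> e * norm (y - 0)"
      using hd[unfolded has_derivative_at_alt] by (rule conjunct2)
    have e2: "\<epsilon>/2 > 0" using \<epsilon> by simp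
    obtain d where dd: "d > 0" "\<forall>y. norm (y - 0) < d \<longrightarrow> norm (g y - g 0 - (y - 0) *\<^sub>R v) \<le> (\<epsilon>/2) * norm (y - 0)"
      using alt[rule_format, OF e2] by (elim exE conjE) (rule that; assumption)
    define t where "t = min d e / 2"
    have t: "t > 0" "t < d" "t < e" unfolding t_def using dd e by auto
    have b: "norm (g t - g 0 - t *\<^sub>R v) \<le> (\<epsilon>/2) * t" using dd(2)[rule_format, of t] t by simp
    define w where "w = (1/t) *\<^sub>R (g t - g 0)"
    have wF: "w \<in> F" unfolding w_def
      using gF[of t] gF[of 0] t e F(1) by (simp add: subspace_diff subspace_scale)
    have "w - v = (1/t) *\<^sub>R (g t - g 0 - t *\<^sub>R v)" unfolding w_def using t by (simp add: algebra_simps)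
    then have "norm (w - v) = norm (g t - g 0 - t *\<^sub>R v) / t" using t by simp
    also have "\<dots> \<le> (\<epsilon>/2) * t / t" using b t by (intro divide_right_mono) auto
    also have "\<dots> < \<epsilon>" using t \<epsilon> by simp
    finally show "\<exists>y\<in>F. dist y v < \<epsilon>" using wF by (intro bexI[of _ w]) (auto simp: dist_norm)
  qed
  then show ?thesis using F(2) by simp
qed

lemma crit_M_zero:
  fixes iX :: "'x::banach \<Rightarrow>\<^sub>L 'g::banach"
    and jY :: "'y::banach \<Rightarrow>\<^sub>L 'h::banach"
    and jH :: "'h \<Rightarrow>\<^sub>L ('g \<Rightarrow>\<^sub>L real)"
  assumes emb_HG: "inj (blinfun_apply jH)"
    and emb_GX: "inj (\<lambda>\<phi>::'g \<Rightarrow>\<^sub>L real. \<phi> o\<^sub>L iX)"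
    and grad: "\<And>v. blinfun_apply (E1x :: 'x \<Rightarrow>\<^sub>L real) v = blinfun_apply (jH (jY m)) (iX v)"
    and crit: "E1x = 0"
  shows "jY m = 0"
proof -
  have "jH (jY m) o\<^sub>L iX = 0 o\<^sub>L iX"
    by (rule blinfun_eqI) (simp add: grad[symmetric] crit)
  then have "jH (jY m) = 0" by (rule injD[OF emb_GX])
  then have "jH (jY m) = jH 0" by (simp add: blinfun.zero_right)
  then show ?thesis by (rule injD[OF emb_HG])
qed

theorem theorem3:
  fixes iX :: "'x::banach \<Rightarrow>\<^sub>L 'g::banach"
    and jY :: "'y::banach \<Rightarrow>\<^sub>L 'h::banach"
    and jH :: "'h \<Rightarrow>\<^sub>L ('g \<Rightarrow>\<^sub>L real)"
    and U :: "'x set"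
    and E :: "'x \<Rightarrow> real"
    and E1 :: "'x \<Rightarrow> ('x \<Rightarrow>\<^sub>L real)"
    and E2 :: "'x \<Rightarrow> ('x \<Rightarrow>\<^sub>L ('x \<Rightarrow>\<^sub>L real))"
    and M :: "'x \<Rightarrow> 'y"
    and M' :: "'x \<Rightarrow> ('x \<Rightarrow>\<^sub>L 'y)"
    and M1 :: "'x \<Rightarrow> ('g \<Rightarrow>\<^sub>L 'h)"
    and X0 :: "'x set"
    and G0 :: "'g set"
    and x_inf :: 'x
  assumes emb_XG: "inj (blinfun_apply iX)"
    and emb_YH: "inj (blinfun_apply jY)"
    and emb_HG: "inj (blinfun_apply jH)"
    and emb_GX: "inj (\<lambda>\<phi>::'g \<Rightarrow>\<^sub>L real. \<phi> o\<^sub>L iX)"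
    and U_open: "open U"
    and E_deriv: "\<And>x. x \<in> U \<Longrightarrow> (E has_derivative blinfun_apply (E1 x)) (at x)"
    and E1_deriv: "\<And>x. x \<in> U \<Longrightarrow> (E1 has_derivative blinfun_apply (E2 x)) (at x)"
    and E2_cont: "continuous_on U E2"
    and x_in: "x_inf \<in> U"
    and x_crit: "E1 x_inf = 0"
    and M_deriv: "\<And>x. x \<in> U \<Longrightarrow> (M has_derivative blinfun_apply (M' x)) (at x)"
    and M'_cont: "continuous_on U M'"
    and M_grad: "\<And>x v. x \<in> U \<Longrightarrow>
        blinfun_apply (E1 x) v = blinfun_apply (jH (jY (M x))) (iX v)"
    and morse_bott: "morse_bott_at U E1 E2 x_inf"
    and M1_ext: "\<And>x v. x \<in> U \<Longrightarrow> blinfun_apply (M1 x) (iX v) = jY (M' x v)"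
    and M1_cont: "continuous_on U M1"
    and X0_compl: "closed_complement {v. blinfun_apply (E2 x_inf) v = 0} X0"
    and G0_compl: "closed_complement {g. blinfun_apply (M1 x_inf) g = 0} G0"
    and X0_G0: "blinfun_apply iX ` X0 \<subseteq> G0"
    and ran_closed: "closed (range (blinfun_apply (M1 x_inf)))"
  shows "\<exists>Z \<sigma>. 0 < Z \<and> 0 < \<sigma> \<and> \<sigma> \<le> 1 \<and>
    (\<forall>x\<in>U. norm (x - x_inf) < \<sigma> \<longrightarrow>
       norm (jY (M x)) \<ge> Z * sqrt \<bar>E x - E x_inf\<bar>)"
proof -
  define K where "K = {v. blinfun_apply (E2 x_inf) v = 0}"
  define A where "A = M1 x_inf"
  have Ksub: "subspace K" unfolding K_def subspace_def
    by (simp add: blinfun.add_right blinfun.scaleR_right blinfun.zero_right)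
  have Kcl: "closed K" unfolding K_def by (intro closed_Collect_eq continuous_intros)
  have X0c: "closed_complement K X0" using X0_compl unfolding K_def .
  obtain P where P: "bounded_linear P" "\<forall>y. P y \<in> K \<and> y - P y \<in> X0" "\<forall>y. y \<in> X0 \<longleftrightarrow> P y = 0"
      "\<forall>k\<in>K. P k = k"
    using complement_projection[OF Ksub Kcl X0c] by blast
  have X0sub: "subspace X0" using X0_compl unfolding closed_complement_def by blast
  have G0: "subspace G0" "closed G0" "{g. A g = 0} \<inter> G0 = {0}" "\<forall>g. \<exists>a\<in>{g. A g = 0}. \<exists>b\<in>G0. g = a + b"
    using G0_compl unfolding closed_complement_def A_def by auto
  have imgA: "A ` G0 = range (blinfun_apply A)"
  proof
    show "A ` G0 \<subseteq> range (blinfun_apply A)" by blast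
    show "range (blinfun_apply A) \<subseteq> A ` G0"
    proof
      fix y assume "y \<in> range (blinfun_apply A)"
      then obtain g where g: "y = A g" by blast
      obtain a b where ab: "A a = 0" "b \<in> G0" "g = a + b" using G0(4) by blast
      have "y = A b" unfolding g ab(3) by (simp add: blinfun.add_right ab(1))
      then show "y \<in> A ` G0" using ab(2) by blast
    qed
  qed
  have ranA: "closed (A ` G0)"
  proof -
    have "closed (range (blinfun_apply A))" unfolding A_def by (rule ran_closed)
    then show ?thesis by (simp only: imgA)
  qed
  have injA: "g = 0" if "g \<in> G0" "A g = 0" for g
    using G0(3) that by blast
  obtain cA where cA: "cA > 0" "\<forall>g\<in>G0. cA * norm g \<le> norm (A g)"
    using bounded_below_closed_range[OF G0(1) G0(2) blinfun.bounded_linear_right ranA injA] by blast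
  obtain V0 where V0: "open V0" "x_inf \<in> V0" "V0 \<subseteq> U" "smooth_submanifold (V0 \<inter> crit U E1)"
      "tangent_space (V0 \<inter> crit U E1) x_inf = K"
    using morse_bott unfolding morse_bott_at_def K_def by blast
  define S0 where "S0 = V0 \<inter> crit U E1"
  have S0crit: "z \<in> U \<and> E1 z = 0" if "z \<in> S0" for z using that unfolding S0_def crit_def by blast
  have xS0: "x_inf \<in> S0" unfolding S0_def crit_def using V0(2) x_in x_crit by blast
  obtain V W and \<phi> \<psi> :: "'x \<Rightarrow> 'x" and F where ch: "open V" "x_inf \<in> V" "open W" "\<phi> ` V = W"
      "\<forall>x\<in>V. \<psi> (\<phi> x) = x" "\<forall>y\<in>W. \<phi> (\<psi> y) = y" "smooth_on V \<phi>" "smooth_on W \<psi>"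
      "subspace F" "closed F" "\<phi> ` (V \<inter> S0) = W \<inter> F"
  proof -
    have "\<forall>p\<in>S0. \<exists>V W (\<phi>::'x \<Rightarrow> 'x) (\<psi>::'x \<Rightarrow> 'x) (F::'x set).
     open V \<and> p \<in> V \<and> open W \<and> \<phi> ` V = W \<and>
     (\<forall>x\<in>V. \<psi> (\<phi> x) = x) \<and> (\<forall>y\<in>W. \<phi> (\<psi> y) = y) \<and>
     smooth_on V \<phi> \<and> smooth_on W \<psi> \<and>
     subspace F \<and> closed F \<and> (\<exists>F'. closed_complement F F') \<and>
     \<phi> ` (V \<inter> S0) = W \<inter> F" using V0(4) unfolding smooth_submanifold_def S0_def .
    from this[rule_format, OF xS0] show ?thesis by (elim exE conjE) (rule that; assumption)
  qed
  obtain \<phi>' where \<phi>': "\<forall>x\<in>V. bounded_linear (\<phi>' x) \<and> (\<phi> has_derivative \<phi>' x) (at x)"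
  proof -
    have "Ck_on 1 V \<phi>" using ch(7) unfolding smooth_on_def by simp
    from C1_from_Ck[OF this ch(1)] show ?thesis by (elim exE conjE) (rule that; assumption)
  qed
  obtain \<psi>' where \<psi>': "\<forall>x\<in>W. bounded_linear (\<psi>' x) \<and> (\<psi> has_derivative \<psi>' x) (at x)"
      "\<forall>x\<in>W. \<forall>e>0. \<exists>d>0. \<forall>y\<in>W. norm (y - x) < d \<longrightarrow> (\<forall>v. norm (\<psi>' y v - \<psi>' x v) \<le> e * norm v)"
  proof -
    have "Ck_on 1 W \<psi>" using ch(8) unfolding smooth_on_def by simp
    from C1_from_Ck[OF this ch(3)] show ?thesis by (elim exE conjE) (rule that; assumption)
  qed
  define f0 where "f0 = \<phi> x_inf"
  have f0: "f0 \<in> W" "f0 \<in> F" using ch(11) xS0 ch(2) unfolding f0_def by blast+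
  have \<psi>0: "\<psi> f0 = x_inf" unfolding f0_def using ch(5) ch(2) by blast
  have \<psi>WF: "\<psi> w \<in> S0" if "w \<in> W" "w \<in> F" for w
  proof -
    from that ch(11) obtain v where v: "v \<in> V \<inter> S0" "w = \<phi> v" by (metis IntI imageE)
    then show ?thesis using ch(5) by simp
  qed
  define B where "B = \<psi>' f0"
  define C where "C = \<phi>' x_inf"
  have Cbl: "bounded_linear C" and Cd: "(\<phi> has_derivative C) (at x_inf)" using \<phi>' ch(2) unfolding C_def by blast+
  have Bbl: "bounded_linear B" and Bd: "(\<psi> has_derivative B) (at f0)" using \<psi>'(1) f0(1) unfolding B_def by blast+
  interpret Cl: bounded_linear C by (rule Cbl)
  interpret Bl: bounded_linear B by (rule Bbl)
  have BC: "B (C v) = v" for v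
  proof -
    have Bd': "(\<psi> has_derivative B) (at (\<phi> x_inf))" using Bd unfolding f0_def .
    have "(\<psi> \<circ> \<phi> has_derivative B \<circ> C) (at x_inf)" by (rule diff_chain_at[OF Cd Bd'])
    then have "((\<lambda>x. x) has_derivative B \<circ> C) (at x_inf)"
      by (rule has_derivative_transform_within_open[OF _ ch(1) ch(2)]) (simp add: ch(5))
    then have "B \<circ> C = (\<lambda>x. x)" using has_derivative_ident by (rule has_derivative_unique)
    then show ?thesis by (metis comp_apply)
  qed
  have CB: "C (B v) = v" for v
  proof -
    have Cd': "(\<phi> has_derivative C) (at (\<psi> f0))" using Cd unfolding \<psi>0 .
    have "(\<phi> \<circ> \<psi> has_derivative C \<circ> B) (at f0)" by (rule diff_chain_at[OF Bd Cd'])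
    then have "((\<lambda>x. x) has_derivative C \<circ> B) (at f0)"
      by (rule has_derivative_transform_within_open[OF _ ch(3) f0(1)]) (simp add: ch(6))
    then have "C \<circ> B = (\<lambda>x. x)" using has_derivative_ident by (rule has_derivative_unique)
    then show ?thesis by (metis comp_apply)
  qed
  have BF: "B u \<in> K" if u: "u \<in> F" for u
  proof -
    obtain e0 where e0: "e0 > 0" "ball f0 e0 \<subseteq> W" using ch(3) f0(1) open_contains_ball by blast
    define e where "e = e0 / (norm u + 1)"
    have nu: "norm u + 1 > 0" by (simp add: add_nonneg_pos)
    have e: "e > 0" unfolding e_def using e0 nu by simp
    have ee: "e * (norm u + 1) = e0" unfolding e_def using nu by simp
    define \<gamma> where "\<gamma> t = \<psi> (f0 + t *\<^sub>R u)" for t :: real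
    have \<gamma>S: "\<gamma> ` {-e<..<e} \<subseteq> S0"
    proof
      fix y assume "y \<in> \<gamma> ` {-e<..<e}"
      then obtain t where t: "t \<in> {-e<..<e}" "y = \<gamma> t" by blast
      have at: "\<bar>t\<bar> < e" using t(1) by auto
      have "\<bar>t\<bar> * norm u \<le> \<bar>t\<bar> * (norm u + 1)" by (simp add: mult_left_mono)
      also have "\<dots> < e * (norm u + 1)" using at nu by (intro mult_strict_right_mono) auto
      finally have "norm (t *\<^sub>R u) < e0" using ee by simp
      then have W: "f0 + t *\<^sub>R u \<in> W" using e0(2) by (auto simp: dist_norm)
      have Fm: "f0 + t *\<^sub>R u \<in> F" using f0(2) u ch(9) by (simp add: subspace_add subspace_scale)
      show "y \<in> S0" unfolding t(2) \<gamma>_def by (rule \<psi>WF[OF W Fm])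
    qed
    have \<gamma>0: "\<gamma> 0 = x_inf" unfolding \<gamma>_def using \<psi>0 by simp
    have "(\<gamma> has_vector_derivative B u) (at 0)"
    proof -
      have l0: "((\<lambda>t. t *\<^sub>R u) has_derivative (\<lambda>s. s *\<^sub>R u)) (at 0)"
        by (rule bounded_linear.has_derivative[OF bounded_linear_scaleR_left has_derivative_ident])
      have "((\<lambda>t. f0 + t *\<^sub>R u) has_derivative (\<lambda>s. 0 + s *\<^sub>R u)) (at 0)"
        by (rule has_derivative_add[OF has_derivative_const l0])
      then have l: "((\<lambda>t. f0 + t *\<^sub>R u) has_derivative (\<lambda>s. s *\<^sub>R u)) (at 0)" by simp
      have Bd0: "(\<psi> has_derivative B) (at ((\<lambda>t. f0 + t *\<^sub>R u) 0))" using Bd by simp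
      have "(\<psi> \<circ> (\<lambda>t. f0 + t *\<^sub>R u) has_derivative B \<circ> (\<lambda>s. s *\<^sub>R u)) (at 0)" by (rule diff_chain_at[OF l Bd0])
      then show ?thesis unfolding has_vector_derivative_def \<gamma>_def by (simp add: o_def Bl.scaleR)
    qed
    then have "B u \<in> tangent_space S0 x_inf" unfolding tangent_space_def mem_Collect_eq
      using e \<gamma>S \<gamma>0 by blast
    then show ?thesis using V0(5) unfolding S0_def by simp
  qed
  have CK: "C k \<in> F" if k: "k \<in> K" for k
  proof -
    have "k \<in> tangent_space S0 x_inf" using V0(5) k unfolding S0_def by simp
    then obtain \<gamma> e where \<gamma>: "e > 0" "\<gamma> ` {-e<..<e} \<subseteq> S0" "\<gamma> 0 = x_inf" "(\<gamma> has_vector_derivative k) (at 0)"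
      unfolding tangent_space_def mem_Collect_eq by blast
    have "isCont \<gamma> 0" using \<gamma>(4) by (rule has_vector_derivative_continuous)
    obtain e1 where e1: "e1 > 0" "ball x_inf e1 \<subseteq> V" using ch(1) ch(2) open_contains_ball by blast
    obtain e2 where e2: "e2 > 0" "\<forall>t. dist t 0 < e2 \<longrightarrow> dist (\<gamma> t) (\<gamma> 0) < e1"
      using \<open>isCont \<gamma> 0\<close> e1(1) unfolding continuous_at_eps_delta by blast
    define e3 where "e3 = min e e2"
    have e3: "e3 > 0" unfolding e3_def using \<gamma>(1) e2(1) by simp
    have inF: "(\<phi> \<circ> \<gamma>) t \<in> F" if t: "\<bar>t\<bar> < e3" for t
    proof -
      have "t \<in> {-e<..<e}" using t unfolding e3_def by auto
      then have S: "\<gamma> t \<in> S0" using \<gamma>(2) by blast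
      have "dist (\<gamma> t) x_inf < e1" using e2(2) t \<gamma>(3) unfolding e3_def by (simp add: dist_real_def)
      then have Vm: "\<gamma> t \<in> V" using e1(2) by (auto simp: dist_commute)
      have "\<phi> (\<gamma> t) \<in> \<phi> ` (V \<inter> S0)" using S Vm by blast
      then show ?thesis using ch(11) by simp
    qed
    have "(\<phi> \<circ> \<gamma> has_vector_derivative C k) (at 0)"
    proof -
      have g: "(\<gamma> has_derivative (\<lambda>t. t *\<^sub>R k)) (at 0)" using \<gamma>(4) unfolding has_vector_derivative_def .
      have Cd0: "(\<phi> has_derivative C) (at (\<gamma> 0))" using Cd \<gamma>(3) by simp
      have "(\<phi> \<circ> \<gamma> has_derivative C \<circ> (\<lambda>t. t *\<^sub>R k)) (at 0)" by (rule diff_chain_at[OF g Cd0])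
      then show ?thesis unfolding has_vector_derivative_def by (simp add: o_def Cl.scaleR)
    qed
    then show ?thesis by (rule vd_in_closed_subspace[OF ch(9) ch(10) _ e3 inF])
  qed
  have PB: "P (B u) = B u" if "u \<in> F" for u using P(4) BF[OF that] by blast
  have CPF: "C (P y) \<in> F" for y using CK P(2) by blast
  have P0: "y \<in> X0" if "P y = 0" for y using P(3) that by blast
  define \<epsilon> where "\<epsilon> = cA / 2"
  have \<epsilon>: "\<epsilon> > 0" unfolding \<epsilon>_def using cA by simp
  obtain \<delta>1 where \<delta>1: "\<delta>1 > 0" "ball x_inf \<delta>1 \<subseteq> U" "\<forall>z\<in>ball x_inf \<delta>1. norm (M1 z - A) \<le> \<epsilon>"
  proof -
    have "isCont M1 x_inf" using M1_cont U_open x_in by (simp add: continuous_on_eq_continuous_at)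
    then obtain d where d: "d > 0" "\<forall>z. dist z x_inf < d \<longrightarrow> dist (M1 z) (M1 x_inf) < \<epsilon>"
      using \<epsilon> unfolding continuous_at_eps_delta by blast
    obtain d2 where d2: "d2 > 0" "ball x_inf d2 \<subseteq> U" using U_open x_in open_contains_ball by blast
    show ?thesis
    proof (rule that[of "min d d2"])
      show "min d d2 > 0" using d d2 by simp
      show "ball x_inf (min d d2) \<subseteq> U" using d2 by auto
      show "\<forall>z\<in>ball x_inf (min d d2). norm (M1 z - A) \<le> \<epsilon>"
      proof
        fix z assume "z \<in> ball x_inf (min d d2)"
        then have "dist z x_inf < d" by (simp add: dist_commute)
        then have "dist (M1 z) (M1 x_inf) < \<epsilon>" using d(2) by blast
        then show "norm (M1 z - A) \<le> \<epsilon>" unfolding A_def by (simp add: dist_norm)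
      qed
    qed
  qed
  have \<delta>h: "\<delta>1 / 2 > 0" using \<delta>1 by simp
  have \<psi>'1: "\<And>y. y \<in> W \<Longrightarrow> bounded_linear (\<psi>' y) \<and> (\<psi> has_derivative \<psi>' y) (at y)"
    using \<psi>'(1) by blast
  have \<psi>'2: "\<And>e. e > 0 \<Longrightarrow> \<exists>d>0. \<forall>y\<in>W. norm (y - f0) < d \<longrightarrow> (\<forall>v. norm (\<psi>' y v - \<psi>' f0 v) \<le> e * norm v)"
    using \<psi>'(2) f0(1) by blast
  obtain \<sigma>0 where \<sigma>0: "\<sigma>0 > 0" "\<forall>x. norm (x - x_inf) < \<sigma>0 \<longrightarrow> (\<exists>f. (\<forall>t\<in>{0..1}. f0 + t *\<^sub>R (f - f0) \<in> W \<inter> F) \<and>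
            norm (\<psi> f - x_inf) < \<delta>1 / 2 \<and> \<psi> f - x \<in> X0)"
    using find_crit[OF ch(3) ch(9) ch(10) f0 \<psi>0 \<psi>'1 \<psi>'2 B_def Cbl CB BC P(1) PB CPF P0 \<delta>h] by blast
  define \<sigma> where "\<sigma> = min 1 (min \<sigma>0 (\<delta>1 / 2))"
  define Q0 where "Q0 = norm jH * (norm A + \<epsilon>)"
  have Q0: "Q0 \<ge> 0" unfolding Q0_def using \<epsilon> by simp
  define Z where "Z = (cA / 2) / sqrt (Q0 + 1)"
  have Zp: "0 < Z" unfolding Z_def using cA Q0 by simp
  have \<sigma>p: "0 < \<sigma>" unfolding \<sigma>_def using \<sigma>0 \<delta>1 by simp
  have \<sigma>1: "\<sigma> \<le> 1" unfolding \<sigma>_def by simp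
  have main: "\<forall>x\<in>U. norm (x - x_inf) < \<sigma> \<longrightarrow> Z * sqrt \<bar>E x - E x_inf\<bar> \<le> norm (jY (M x))"
  proof (intro ballI impI)
    fix x assume xU: "x \<in> U" and xs: "norm (x - x_inf) < \<sigma>"
    have "\<sigma> \<le> \<sigma>0" "\<sigma> \<le> \<delta>1 / 2" unfolding \<sigma>_def by auto
    then have xs0: "norm (x - x_inf) < \<sigma>0" and xs1: "norm (x - x_inf) < \<delta>1 / 2" using xs by linarith+
    obtain f where f: "\<forall>t\<in>{0..1}. f0 + t *\<^sub>R (f - f0) \<in> W \<inter> F" "norm (\<psi> f - x_inf) < \<delta>1 / 2" "\<psi> f - x \<in> X0"
      using \<sigma>0(2) xs0 by blast
    define xc where "xc = \<psi> f"
    define l where "l t = f0 + t *\<^sub>R (f - f0)" for t :: real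
    have lWF: "l t \<in> W" "l t \<in> F" if "t \<in> {0..1}" for t using f(1) that unfolding l_def by blast+
    have l1: "l 1 = f" and l0: "l 0 = f0" unfolding l_def by simp_all
    have fW: "f \<in> W" and fF: "f \<in> F" using lWF[of 1] l1 by auto
    have xcS: "xc \<in> S0" unfolding xc_def by (rule \<psi>WF[OF fW fF])
    have xcU: "xc \<in> U" and xcc: "E1 xc = 0" using S0crit[OF xcS] by auto
    have M0: "jY (M xc) = 0" by (rule crit_M_zero[OF emb_HG emb_GX M_grad[OF xcU] xcc])
    have Exc: "E xc = E x_inf"
    proof -
      define q where "q t = E (\<psi> (l t))" for t
      have qd: "(q has_derivative (\<lambda>s. 0)) (at t within {0..1})" if t: "t \<in> {0..1}" for t
      proof -
        have l0': "((\<lambda>t. t *\<^sub>R (f - f0)) has_derivative (\<lambda>s. s *\<^sub>R (f - f0))) (at t)"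
          by (rule bounded_linear.has_derivative[OF bounded_linear_scaleR_left has_derivative_ident])
        have "((\<lambda>t. f0 + t *\<^sub>R (f - f0)) has_derivative (\<lambda>s. 0 + s *\<^sub>R (f - f0))) (at t)"
          by (rule has_derivative_add[OF has_derivative_const l0'])
        then have ld: "(l has_derivative (\<lambda>s. s *\<^sub>R (f - f0))) (at t)" unfolding l_def by simp
        have \<psi>d: "(\<psi> has_derivative \<psi>' (l t)) (at (l t))" using \<psi>'(1) lWF[OF t] by blast
        have pS: "\<psi> (l t) \<in> S0" by (rule \<psi>WF[OF lWF[OF t]])
        have pU: "\<psi> (l t) \<in> U" and pc: "E1 (\<psi> (l t)) = 0" using S0crit[OF pS] by auto
        have Ed: "(E has_derivative blinfun_apply (E1 (\<psi> (l t)))) (at ((\<psi> \<circ> l) t))"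
          using E_deriv[OF pU] by simp
        have d1: "(\<psi> \<circ> l has_derivative \<psi>' (l t) \<circ> (\<lambda>s. s *\<^sub>R (f - f0))) (at t)" by (rule diff_chain_at[OF ld \<psi>d])
        have "(E \<circ> (\<psi> \<circ> l) has_derivative blinfun_apply (E1 (\<psi> (l t))) \<circ> (\<psi>' (l t) \<circ> (\<lambda>s. s *\<^sub>R (f - f0)))) (at t)"
          by (rule diff_chain_at[OF d1 Ed])
        then have "(q has_derivative (\<lambda>s. 0)) (at t)" unfolding q_def pc by (simp add: o_def)
        then show ?thesis by (rule has_derivative_at_withinI)
      qed
      have "norm (q 1 - q 0) \<le> 0 * norm (1 - (0::real))"
        by (rule differentiable_bound[OF convex_real_interval(5) qd]) (auto simp: onorm_zero)
      then have "q 1 = q 0" by simp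
      then show ?thesis unfolding q_def l1 l0 xc_def \<psi>0 .
    qed
    have segB: "xc + t *\<^sub>R (x - xc) \<in> ball x_inf \<delta>1" if t: "t \<in> {0..1}" for t
    proof -
      have eq: "xc + t *\<^sub>R (x - xc) - x_inf = (1 - t) *\<^sub>R (xc - x_inf) + t *\<^sub>R (x - x_inf)"
        by (simp add: algebra_simps)
      have "norm (xc + t *\<^sub>R (x - xc) - x_inf) \<le> norm ((1 - t) *\<^sub>R (xc - x_inf)) + norm (t *\<^sub>R (x - x_inf))"
        unfolding eq by (rule norm_triangle_ineq)
      also have "\<dots> = (1 - t) * norm (xc - x_inf) + t * norm (x - x_inf)" using t by simp
      also have "\<dots> \<le> (1 - t) * (\<delta>1 / 2) + t * (\<delta>1 / 2)"
        using t f(2) xs1 unfolding xc_def by (intro add_mono mult_left_mono) auto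
      also have "\<dots> = \<delta>1 / 2" by (simp add: field_simps)
      also have "\<dots> < \<delta>1" using \<delta>1(1) by simp
      finally show ?thesis by (simp add: dist_norm norm_minus_commute)
    qed
    have segU: "xc + t *\<^sub>R (x - xc) \<in> U" if "t \<in> {0..1}" for t using segB[OF that] \<delta>1(2) by blast
    have near: "norm (M1 (xc + t *\<^sub>R (x - xc)) - A) \<le> \<epsilon>" if "t \<in> {0..1}" for t using segB[OF that] \<delta>1(3) by blast
    note est = seg_estimates[of xc x U M1 A \<epsilon> E E1 M M' jH jY iX, OF segU near E_deriv M_deriv M_grad M1_ext M0]
    define g where "g = iX (x - xc)"
    have hX0: "x - xc \<in> X0"
    proof -
      have "- (\<psi> f - x) \<in> X0" by (rule subspace_neg[OF X0sub f(3)])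
      then show ?thesis unfolding xc_def by simp
    qed
    have gG0: "g \<in> G0" unfolding g_def using X0_G0 hX0 by blast
    have lowA: "cA * norm g \<le> norm (A g)" using cA(2) gG0 by blast
    have e1: "norm (jY (M x) - A g) \<le> \<epsilon> * norm g" using est(1) unfolding g_def .
    have e2: "\<bar>E x - E x_inf\<bar> \<le> Q0 * (norm g)\<^sup>2" using est(2) unfolding g_def Q0_def Exc .
    have lowM: "(cA / 2) * norm g \<le> norm (jY (M x))"
    proof -
      have "norm (A g) \<le> norm (jY (M x)) + norm (jY (M x) - A g)"
        using norm_triangle_ineq4[of "jY (M x)" "jY (M x) - A g"] by simp
      then show ?thesis using lowA e1 unfolding \<epsilon>_def by linarith
    qed
    have "sqrt \<bar>E x - E x_inf\<bar> \<le> sqrt (Q0 * (norm g)\<^sup>2)" using e2 by (rule real_sqrt_le_mono)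
    also have "\<dots> \<le> sqrt ((Q0 + 1) * (norm g)\<^sup>2)" by (rule real_sqrt_le_mono) (simp add: mult_right_mono)
    also have "\<dots> = sqrt (Q0 + 1) * norm g" by (simp add: real_sqrt_mult)
    finally have sq: "sqrt \<bar>E x - E x_inf\<bar> \<le> sqrt (Q0 + 1) * norm g" .
    have Zs: "Z * sqrt (Q0 + 1) = cA / 2" unfolding Z_def using Q0 by simp
    have "Z * sqrt \<bar>E x - E x_inf\<bar> \<le> Z * (sqrt (Q0 + 1) * norm g)" using sq Zp by (intro mult_left_mono) auto
    also have "\<dots> = (cA / 2) * norm g" using Zs by (simp add: mult.assoc[symmetric])
    finally show "Z * sqrt \<bar>E x - E x_inf\<bar> \<le> norm (jY (M x))" using lowM by linarith
  qed
  show ?thesis using Zp \<sigma>p \<sigma>1 main by blast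
qed

end
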